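(* Fix $s\in[-1,1)$. Let $\hat{\varrho}$ be a single-mode bosonic state that is P-classical, i.e. its $s$-parameterized quasiprobability distribution in position-momentum coordinates can be written as $W_{\hat{\varrho}}(q,p;s)=\int dq'\,dp'\,P(q',p')\,W_{q',p'}(q,p;s)$ with $P\ge 0$ and $\int P=1$. Let $w(q,0;s)=\int dp\,W_{\hat{\varrho}}(q,p;s)$ be its $s$-parameterized position tomogram. Let $G\ge 0$ be a normalized function on $\mathbb{R}$ with finite support and define the fictitious tomogram $$w_{\rm f}(p,\tfrac{\pi}{2};s)=\frac{1}{\sqrt{\pi(1-s)}}\int dp'\,G(p')\,e^{-\frac{(p-p')^2}{1-s}}.$$ Then the function $W_{\rm f}(q,p;s):=w(q,0;s)\,w_{\rm f}(p,\tfrac{\pi}{2};s)$ satisfies $$W_{\rm f}(q,p;s)=\int dq'\,dp'\,F(q')G(p')\,W_{q',p'}(q,p;s),\qquad F(q')=\int dp'\,P(q',p'),$$ so that $W_{\rm f}$ is the $s$-parameterized quasiprobability distribution of a bona fide P-classical quantum state (with P-function $F(q')G(p')$). Consequently, if $W_{\rm f}(q,p;s)$ is not the $s$-parameterized distribution of any legitimate quantum state, then $\hat{\varrho}$ is P-nonclassical. In particular this applies to the choices $w_{\rm f}(p,\tfrac{\pi}{2};s)=\frac{1}{\sqrt{\pi(1-s)}}e^{-p^2/(1-s)}$ (the vacuum tomogram) and $w_{\rm f}(p,\tfrac{\pi}{2};s)=w(p,0;s)$ (the state's own tomogram evaluated at $p$).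
   Context: For $q_0,p_0\in\mathbb{R}$ (corresponding to the coherent state $|\alpha\rangle$ with $q_0=\sqrt{2}\,\mathrm{Re}\,\alpha$, $p_0=\sqrt{2}\,\mathrm{Im}\,\alpha$), its $s$-parameterized quasiprobability distribution in position-momentum coordinates is $W_{q_0,p_0}(q,p;s)=\frac{1}{\pi(1-s)}\exp\{-[(q-q_0)^2+(p-p_0)^2]/(1-s)\}$. The $s$-parameterized quasiprobability distribution of an operator $\hat\Lambda$ is $\mathscr{W}_{\hat\Lambda}(\alpha;s)=\mathrm{Tr}\,\hat\Lambda\hat{T}(\alpha;s)$, where $\hat{T}(\alpha;s)=\frac{1}{\pi}\int d^2\xi\,\exp\{\alpha\xi^*-\alpha^*\xi+\tfrac{s}{2}|\xi|^2\}\exp\{\xi a^\dagger-\xi^*a\}$; $s=1$ gives the P-function, $s=0$ the Wigner function, $s=-1$ the Q-function. A state is P-classical if its P-function is a nonnegative probability density, and P-nonclassical otherwise. *)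

theory Defs
  imports "HOL-Probability.Probability"
begin

text \<open>s-parameterized quasiprobability distribution of the coherent state with
  phase-space centre (q0,p0), in position-momentum coordinates.\<close>
definition coh_qpd :: "real \<Rightarrow> real \<Rightarrow> real \<Rightarrow> real \<Rightarrow> real \<Rightarrow> real" where
  "coh_qpd s q0 p0 q p = exp (- ((q - q0)^2 + (p - p0)^2) / (1 - s)) / (pi * (1 - s))"

text \<open>Measures (rather than density functions) are used so that singular
  P-functions such as the delta function of the vacuum are included.\<close>
definition qpd_of_meas :: "real \<Rightarrow> (real \<times> real) measure \<Rightarrow> real \<Rightarrow> real \<Rightarrow> real" where
  "qpd_of_meas s M q p = (\<integral>z. coh_qpd s (fst z) (snd z) q p \<partial>M)"

definition is_P_distribution :: "(real \<times> real) measure \<Rightarrow> bool" where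
  "is_P_distribution M \<longleftrightarrow> prob_space M \<and> sets M = sets (borel :: (real \<times> real) measure)"

definition P_classical_qpd :: "real \<Rightarrow> (real \<Rightarrow> real \<Rightarrow> real) \<Rightarrow> bool" where
  "P_classical_qpd s W \<longleftrightarrow> (\<exists>M. is_P_distribution M \<and> (\<forall>q p. W q p = qpd_of_meas s M q p))"

definition pos_tomogram :: "(real \<Rightarrow> real \<Rightarrow> real) \<Rightarrow> real \<Rightarrow> real" where
  "pos_tomogram W q = (\<integral>p. W q p \<partial>lborel)"

definition fict_tomogram :: "real \<Rightarrow> (real \<Rightarrow> real) \<Rightarrow> real \<Rightarrow> real" where
  "fict_tomogram s G p = (\<integral>p'. G p' * exp (- ((p - p')^2) / (1 - s)) \<partial>lborel) / sqrt (pi * (1 - s))"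

definition vac_tomogram :: "real \<Rightarrow> real \<Rightarrow> real" where
  "vac_tomogram s p = exp (- (p^2) / (1 - s)) / sqrt (pi * (1 - s))"

end

theory Submission imports Defs begin

definition nd :: "real \<Rightarrow> real \<Rightarrow> real \<Rightarrow> real" where
  "nd s m x = normal_density m (sqrt ((1 - s) / 2)) x"

lemma nd_eq: assumes "s < 1"
  shows "nd s m x = exp (- ((x - m)^2) / (1 - s)) / sqrt (pi * (1 - s))"
proof -
  have h: "(sqrt ((1 - s) / 2))^2 = (1 - s)/2" using assms by simp
  have h1: "2 * (sqrt ((1 - s) / 2))^2 = 1 - s" "2 * pi * (sqrt ((1 - s) / 2))^2 = pi * (1 - s)"
    using h by simp_all
  show ?thesis unfolding nd_def normal_density_def h1 by simp
qed

lemma nd_meas[measurable]: "(\<lambda>z. nd s (f z) (g z)) \<in> borel_measurable N"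
  if [measurable]: "f \<in> borel_measurable N" "g \<in> borel_measurable N"
  unfolding nd_def normal_density_def by measurable

lemma nd_nonneg: "0 \<le> nd s m x" unfolding nd_def by simp

lemma nd_bound: assumes "s < 1" shows "nd s m x \<le> 1 / sqrt (pi * (1 - s))"
proof -
  have "exp (- ((x - m)^2) / (1 - s)) \<le> 1" using assms by simp
  moreover have "sqrt (pi * (1 - s)) > 0" using assms by simp
  ultimately show ?thesis unfolding nd_eq[OF assms] by (simp add: divide_right_mono)
qed

lemma nd_sym: "nd s m x = nd s x m"
  unfolding nd_def normal_density_def by (simp add: power2_commute)

lemma nd_int: "s < 1 \<Longrightarrow> (\<integral>x. nd s m x \<partial>lborel) = 1" unfolding nd_def
  by (rule integral_normal_density) simp
lemma nd_integrable: "s < 1 \<Longrightarrow> integrable lborel (nd s m)" unfolding nd_def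
  by (rule integrable_normal_density) simp

lemma coh_eq: assumes "s < 1" shows "coh_qpd s q0 p0 q p = nd s q0 q * nd s p0 p"
proof -
  have "sqrt (pi * (1 - s)) * sqrt (pi * (1 - s)) = pi * (1 - s)" using assms by simp
  then show ?thesis unfolding coh_qpd_def nd_eq[OF assms]
    by (simp add: field_simps exp_add[symmetric] diff_divide_distrib add_divide_distrib)
qed


lemma pps: "prob_space A \<Longrightarrow> prob_space B \<Longrightarrow> pair_prob_space A B"
  by (simp add: pair_prob_space_def pair_sigma_finite_def prob_space_imp_sigma_finite)

lemma prod_P:
  fixes A B :: "real measure"
  assumes "prob_space A" "prob_space B" "sets A = sets borel" "sets B = sets borel"
  shows "is_P_distribution (A \<Otimes>\<^sub>M B)"
proof -
  interpret P: pair_prob_space A B using pps assms by blast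
  have "sets (A \<Otimes>\<^sub>M B) = sets (borel \<Otimes>\<^sub>M borel)"
    using assms(3,4) by (rule sets_pair_measure_cong)
  then show ?thesis unfolding is_P_distribution_def borel_prod
    using P.prob_space_axioms by simp
qed

lemma prod_qpd:
  fixes A B :: "real measure"
  assumes s: "s < 1" and "prob_space A" "prob_space B" and sA: "sets A = sets borel" and sB: "sets B = sets borel"
  shows "qpd_of_meas s (A \<Otimes>\<^sub>M B) q p = (\<integral>x. nd s x q \<partial>A) * (\<integral>y. nd s y p \<partial>B)"
proof -
  interpret P: pair_prob_space A B using pps assms by blast
  have sAB: "sets (A \<Otimes>\<^sub>M B) = sets (borel \<Otimes>\<^sub>M borel)"
    using sA sB by (rule sets_pair_measure_cong)
  have mAB: "(\<lambda>(x, y). nd s x q * nd s y p) \<in> borel_measurable (A \<Otimes>\<^sub>M B)"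
    unfolding measurable_cong_sets[OF sAB refl] by measurable
  have intAB: "integrable (A \<Otimes>\<^sub>M B) (\<lambda>(x, y). nd s x q * nd s y p)"
  proof (rule P.P.integrable_const_bound[where B="1 / sqrt (pi * (1 - s)) * (1 / sqrt (pi * (1 - s)))"])
    show "AE x in A \<Otimes>\<^sub>M B. norm ((\<lambda>(x, y). nd s x q * nd s y p) x) \<le> 1 / sqrt (pi * (1 - s)) * (1 / sqrt (pi * (1 - s)))"
    proof (rule AE_I2)
      fix z :: "real \<times> real"
      obtain x y where z: "z = (x, y)" by fastforce
      have "nd s x q * nd s y p \<le> 1 / sqrt (pi * (1 - s)) * (1 / sqrt (pi * (1 - s)))"
        by (rule mult_mono) (use nd_bound[OF s] nd_nonneg s in auto)
      then show "norm ((\<lambda>(x, y). nd s x q * nd s y p) z) \<le> 1 / sqrt (pi * (1 - s)) * (1 / sqrt (pi * (1 - s)))"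
        unfolding z using nd_nonneg[of s x q] nd_nonneg[of s y p] by simp
    qed
  qed (rule mAB)
  have mB: "(\<lambda>y. nd s y p) \<in> borel_measurable B"
    unfolding measurable_cong_sets[OF sB refl] by measurable
  have "qpd_of_meas s (A \<Otimes>\<^sub>M B) q p = (\<integral>z. (\<lambda>(x, y). nd s x q * nd s y p) z \<partial>(A \<Otimes>\<^sub>M B))"
    unfolding qpd_of_meas_def coh_eq[OF s] by (simp add: split_beta)
  also have "\<dots> = (\<integral>x. (\<integral>y. nd s x q * nd s y p \<partial>B) \<partial>A)"
    using P.integral_fst[OF intAB] by simp
  also have "\<dots> = (\<integral>x. nd s x q * (\<integral>y. nd s y p \<partial>B) \<partial>A)"
    by simp
  also have "\<dots> = (\<integral>x. nd s x q \<partial>A) * (\<integral>y. nd s y p \<partial>B)"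
    by simp
  finally show ?thesis .
qed


lemma tomo_eq:
  assumes s: "s < 1" and P: "is_P_distribution M"
    and W_def: "\<forall>q p. W q p = qpd_of_meas s M q p"
  shows "pos_tomogram W q = (\<integral>x. nd s x q \<partial>(distr M lborel fst))"
proof -
  interpret M: prob_space M using P unfolding is_P_distribution_def by blast
  have sM: "sets M = sets (borel :: (real \<times> real) measure)" using P unfolding is_P_distribution_def by blast
  interpret Q: pair_sigma_finite M lborel
    by (simp add: pair_sigma_finite_def M.sigma_finite_measure_axioms lborel.sigma_finite_measure_axioms)
  have sM2: "sets M = sets ((borel :: real measure) \<Otimes>\<^sub>M (borel :: real measure))"
    unfolding borel_prod by (rule sM)
  have sMl: "sets (M \<Otimes>\<^sub>M lborel) = sets (((borel :: real measure) \<Otimes>\<^sub>M (borel :: real measure)) \<Otimes>\<^sub>M borel)"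
    using sM2 sets_lborel by (rule sets_pair_measure_cong)
  define f where "f = (\<lambda>(z::real\<times>real) (y::real). nd s (fst z) q * nd s (snd z) y)"
  have mf: "case_prod f \<in> borel_measurable (M \<Otimes>\<^sub>M lborel)"
    unfolding measurable_cong_sets[OF sMl refl] f_def by measurable
  have mM: "(\<lambda>z. nd s (fst z) q) \<in> borel_measurable M"
    unfolding measurable_cong_sets[OF sM2 refl] by measurable
  have inner: "(\<integral>y. f z y \<partial>lborel) = nd s (fst z) q" for z
    unfolding f_def using nd_int[OF s] by simp
  have intf: "integrable (M \<Otimes>\<^sub>M lborel) (case_prod f)"
  proof (rule Q.Fubini_integrable)
    show "case_prod f \<in> borel_measurable (M \<Otimes>\<^sub>M lborel)" by (rule mf)
    have "(\<lambda>z. \<integral>y. norm (case_prod f (z, y)) \<partial>lborel) = (\<lambda>z. nd s (fst z) q)"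
    proof
      fix z
      have "(\<lambda>y. norm (case_prod f (z, y))) = f z"
        unfolding f_def using nd_nonneg by (auto simp: abs_mult)
      then show "(\<integral>y. norm (case_prod f (z, y)) \<partial>lborel) = nd s (fst z) q" using inner by simp
    qed
    moreover have "integrable M (\<lambda>z. nd s (fst z) q)"
    proof (rule M.integrable_const_bound[where B="1 / sqrt (pi * (1 - s))"])
      show "AE x in M. norm (nd s (fst x) q) \<le> 1 / sqrt (pi * (1 - s))"
        using nd_bound[OF s] nd_nonneg by simp
    qed (rule mM)
    ultimately show "integrable M (\<lambda>z. \<integral>y. norm (case_prod f (z, y)) \<partial>lborel)" by simp
    show "AE z in M. integrable lborel (\<lambda>y. case_prod f (z, y))"
      unfolding f_def using nd_integrable[OF s] by simp
  qed
  have "pos_tomogram W q = (\<integral>y. \<integral>z. f z y \<partial>M \<partial>lborel)"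
  proof -
    have "W q = (\<lambda>y. \<integral>z. f z y \<partial>M)"
      unfolding f_def using W_def by (simp add: qpd_of_meas_def coh_eq[OF s] fun_eq_iff)
    then show ?thesis unfolding pos_tomogram_def by simp
  qed
  also have "\<dots> = (\<integral>z. \<integral>y. f z y \<partial>lborel \<partial>M)"
    by (rule Q.Fubini_integral[OF intf])
  also have "\<dots> = (\<integral>z. nd s (fst z) q \<partial>M)" by (simp add: inner)
  also have "\<dots> = (\<integral>x. nd s x q \<partial>(distr M lborel fst))"
  proof (rule integral_distr[symmetric])
    show "fst \<in> measurable M lborel"
      unfolding measurable_cong_sets[OF sM2 refl] by measurable
  qed measurable
  finally show ?thesis .
qed

lemma fict_eq:
  assumes s: "s < 1" and G_meas: "G \<in> borel_measurable borel" and G_nonneg: "\<forall>p. 0 \<le> G p"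
  shows "fict_tomogram s G p = (\<integral>y. nd s y p \<partial>(density lborel G))"
proof -
  have "(\<integral>y. nd s y p \<partial>(density lborel G)) = (\<integral>y. G y *\<^sub>R nd s y p \<partial>lborel)"
    by (rule integral_density) (use G_meas G_nonneg in auto)
  also have "\<dots> = (\<integral>y. G y * exp (- ((p - y)^2) / (1 - s)) / sqrt (pi * (1 - s)) \<partial>lborel)"
    unfolding nd_eq[OF s] by simp
  also have "\<dots> = fict_tomogram s G p"
    unfolding fict_tomogram_def by simp
  finally show ?thesis by simp
qed

lemma prob_density:
  assumes G_meas: "G \<in> borel_measurable borel" and G_nonneg: "\<forall>p. 0 \<le> G p"
    and G_int: "integrable lborel G" and G_norm: "(\<integral>p. G p \<partial>lborel) = 1"
  shows "prob_space (density lborel G)"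
proof
  have "emeasure (density lborel G) (space (density lborel G)) = (\<integral>\<^sup>+x. ennreal (G x) \<partial>lborel)"
    by (subst emeasure_density) (use G_meas in auto)
  also have "\<dots> = ennreal (\<integral>x. G x \<partial>lborel)"
    by (rule nn_integral_eq_integral) (use G_int G_nonneg in auto)
  finally show "emeasure (density lborel G) (space (density lborel G)) = 1" using G_norm by simp
qed


theorem mainTheorem2:
  fixes s :: real
    and M :: "(real \<times> real) measure"
    and W :: "real \<Rightarrow> real \<Rightarrow> real"
    and G :: "real \<Rightarrow> real"
  assumes s_range: "-1 \<le> s" "s < 1"
    and P_class: "is_P_distribution M"
    and W_def: "\<forall>q p. W q p = qpd_of_meas s M q p"
    and G_meas: "G \<in> borel_measurable borel"
    and G_nonneg: "\<forall>p. 0 \<le> G p"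
    and G_int: "integrable lborel G"
    and G_norm: "(\<integral>p. G p \<partial>lborel) = 1"
    and G_supp: "bounded {p. G p \<noteq> 0}"
  shows "(\<forall>q p. pos_tomogram W q * fict_tomogram s G p
                 = qpd_of_meas s (distr M lborel fst \<Otimes>\<^sub>M density lborel G) q p)
         \<and> is_P_distribution (distr M lborel fst \<Otimes>\<^sub>M density lborel G)
         \<and> P_classical_qpd s (\<lambda>q p. pos_tomogram W q * fict_tomogram s G p)
         \<and> P_classical_qpd s (\<lambda>q p. pos_tomogram W q * vac_tomogram s p)
         \<and> P_classical_qpd s (\<lambda>q p. pos_tomogram W q * pos_tomogram W p)"
proof -
  have s: "s < 1" by (rule s_range(2))
  interpret M: prob_space M using P_class unfolding is_P_distribution_def by blast
  have sM: "sets M = sets (borel :: (real \<times> real) measure)" using P_class unfolding is_P_distribution_def by blast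
  define A where "A = distr M lborel fst"
  have pA: "prob_space A" unfolding A_def
  proof (rule M.prob_space_distr)
    have sM2: "sets M = sets ((borel :: real measure) \<Otimes>\<^sub>M (borel :: real measure))"
      unfolding borel_prod by (rule sM)
    show "fst \<in> M \<rightarrow>\<^sub>M lborel" unfolding measurable_cong_sets[OF sM2 refl] by measurable
  qed
  have sA: "sets A = sets borel" unfolding A_def by simp
  define B where "B = density lborel G"
  have pB: "prob_space B" unfolding B_def by (rule prob_density) (use assms in auto)
  have sB: "sets B = sets borel" unfolding B_def by simp
  define R where "R = return lborel (0::real)"
  have pR: "prob_space R" unfolding R_def by (rule prob_space_return) simp
  have sR: "sets R = sets borel" unfolding R_def by simp
  have tom: "pos_tomogram W q = (\<integral>x. nd s x q \<partial>A)" for q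
    unfolding A_def by (rule tomo_eq[OF s P_class W_def])
  have fict: "fict_tomogram s G p = (\<integral>y. nd s y p \<partial>B)" for p
    unfolding B_def by (rule fict_eq[OF s G_meas G_nonneg])
  have vac: "vac_tomogram s p = (\<integral>y. nd s y p \<partial>R)" for p
  proof -
    have "(\<integral>y. nd s y p \<partial>R) = nd s 0 p" unfolding R_def
      by (rule integral_return) auto
    then show ?thesis unfolding vac_tomogram_def nd_eq[OF s] by (metis diff_zero)
  qed
  have E1: "\<forall>q p. pos_tomogram W q * fict_tomogram s G p = qpd_of_meas s (A \<Otimes>\<^sub>M B) q p"
    using prod_qpd[OF s pA pB sA sB] tom fict by simp
  have E2: "\<forall>q p. pos_tomogram W q * vac_tomogram s p = qpd_of_meas s (A \<Otimes>\<^sub>M R) q p"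
    using prod_qpd[OF s pA pR sA sR] tom vac by simp
  have E3: "\<forall>q p. pos_tomogram W q * pos_tomogram W p = qpd_of_meas s (A \<Otimes>\<^sub>M A) q p"
    using prod_qpd[OF s pA pA sA sA] tom by simp
  have P1: "is_P_distribution (A \<Otimes>\<^sub>M B)" by (rule prod_P[OF pA pB sA sB])
  have P2: "is_P_distribution (A \<Otimes>\<^sub>M R)" by (rule prod_P[OF pA pR sA sR])
  have P3: "is_P_distribution (A \<Otimes>\<^sub>M A)" by (rule prod_P[OF pA pA sA sA])
  show ?thesis
    unfolding A_def[symmetric] B_def[symmetric] P_classical_qpd_def
    using E1 E2 E3 P1 P2 P3 by blast
qed

end
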